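(* Let $N\in\mathbb{N}$ and $X_1,X_2\subseteq[N]$ with $|X_1|\cdot|X_2|=N$, $X=(X_1,X_2)$, and let $\mu=\mathbb{E}_{\sigma\sim\mathcal D_X}[|X_\sigma|]$. Then for every real $u\ge 6\mu$, $$\Pr_{\pi\sim\mathcal D_X}\big[|X_\pi|\ge \mu+u\big]\le 3\exp\!\left(-\tfrac{4u}{9}\right).$$
   Context: For $\pi\in S_N$, $X_\pi=\{(i,j): i\in X_1,\ j\in X_2,\ \pi(i)=j\}$ is the set of $X$-pairs of $\pi$. The distribution $\mathcal{D}_X$ on $S_N$ is defined by $\Pr_{\Phi\sim\mathcal D_X}[\Phi=\varphi]=|X_\varphi|/\sum_{\sigma\in S_N}|X_\sigma|$ for $\varphi\in S_N$. *)

theory Defs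
  imports "HOL-Analysis.Analysis" "HOL-Combinatorics.Permutations"
begin

definition SN :: "nat \<Rightarrow> (nat \<Rightarrow> nat) set" where
  "SN N = {p. p permutes {1..N}}"

definition Xpairs :: "nat set \<Rightarrow> nat set \<Rightarrow> (nat \<Rightarrow> nat) \<Rightarrow> (nat \<times> nat) set" where
  "Xpairs X1 X2 p = {(i, j). i \<in> X1 \<and> j \<in> X2 \<and> p i = j}"

definition DX :: "nat \<Rightarrow> nat set \<Rightarrow> nat set \<Rightarrow> (nat \<Rightarrow> nat) \<Rightarrow> real" where
  "DX N X1 X2 \<phi> = real (card (Xpairs X1 X2 \<phi>)) /
      (\<Sum>\<sigma>\<in>SN N. real (card (Xpairs X1 X2 \<sigma>)))"

definition DX_prob :: "nat \<Rightarrow> nat set \<Rightarrow> nat set \<Rightarrow> ((nat \<Rightarrow> nat) \<Rightarrow> bool) \<Rightarrow> real" where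
  "DX_prob N X1 X2 P = (\<Sum>\<pi>\<in>{\<pi>\<in>SN N. P \<pi>}. DX N X1 X2 \<pi>)"

definition DX_expect :: "nat \<Rightarrow> nat set \<Rightarrow> nat set \<Rightarrow> ((nat \<Rightarrow> nat) \<Rightarrow> real) \<Rightarrow> real" where
  "DX_expect N X1 X2 f = (\<Sum>\<sigma>\<in>SN N. DX N X1 X2 \<sigma> * f \<sigma>)"

end

theory Submission
  imports Defs
begin

lemma exists_perm_image:
  assumes "finite S" "C \<subseteq> S" "D \<subseteq> S" "card C = card D"
  shows "\<exists>\<sigma>. \<sigma> permutes S \<and> \<sigma> ` C = D"
proof -
  have fC: "finite C" "finite D" using assms finite_subset by auto
  obtain g where g: "bij_betw g C D" using finite_same_card_bij fC assms(4) by blast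
  have "card (S - C) = card (S - D)" using assms fC by (simp add: card_Diff_subset)
  then obtain h where h: "bij_betw h (S - C) (S - D)"
    using finite_same_card_bij[of "S - C" "S - D"] assms(1) by auto
  define \<sigma> where "\<sigma> x = (if x \<in> C then g x else if x \<in> S then h x else x)" for x
  have "bij_betw \<sigma> C D = bij_betw g C D" by (rule bij_betw_cong) (simp add: \<sigma>_def)
  with g have b1: "bij_betw \<sigma> C D" by simp
  have "bij_betw \<sigma> (S - C) (S - D) = bij_betw h (S - C) (S - D)" by (rule bij_betw_cong) (simp add: \<sigma>_def)
  with h have b2: "bij_betw \<sigma> (S - C) (S - D)" by simp
  have "bij_betw \<sigma> (C \<union> (S - C)) (D \<union> (S - D))"
    by (rule bij_betw_combine[OF b1 b2]) auto
  moreover have "C \<union> (S - C) = S" "D \<union> (S - D) = S" using assms by auto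
  ultimately have "bij_betw \<sigma> S S" by simp
  then have "\<sigma> permutes S" by (rule bij_imp_permutes) (use assms in \<open>auto simp: \<sigma>_def\<close>)
  moreover have "\<sigma> ` C = D" using b1 by (simp add: bij_betw_def)
  ultimately show ?thesis by blast
qed

lemma fiber_card:
  assumes "finite S" "A \<subseteq> S" "C \<subseteq> S" "card C = card A"
  shows "card {p. p permutes S \<and> p ` A = C} * (card S choose card A) = fact (card S)"
proof -
  define F where "F C = {p. p permutes S \<and> p ` A = C}" for C
  have finF: "finite (F B)" for B
    using finite_permutations[OF assms(1)] by (rule finite_subset[rotated]) (auto simp: F_def)
  have le: "card (F C1) \<le> card (F C2)"
    if c: "C1 \<subseteq> S" "C2 \<subseteq> S" "card C1 = card A" "card C2 = card A" for C1 C2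
  proof -
    obtain \<sigma> where s: "\<sigma> permutes S" "\<sigma> ` C1 = C2"
      using exists_perm_image[of S C1 C2] assms c by auto
    have "inj_on (\<lambda>p. \<sigma> \<circ> p) (F C1)"
    proof (rule inj_onI)
      fix p q assume "\<sigma> \<circ> p = \<sigma> \<circ> q"
      then have "\<sigma> (p x) = \<sigma> (q x)" for x by (metis comp_apply)
      then show "p = q" using injD[OF permutes_inj[OF s(1)]] by blast
    qed
    moreover have "(\<lambda>p. \<sigma> \<circ> p) ` F C1 \<subseteq> F C2"
    proof
      fix q assume "q \<in> (\<lambda>p. \<sigma> \<circ> p) ` F C1"
      then obtain p where p: "p permutes S" "p ` A = C1" and q: "q = \<sigma> \<circ> p"
        by (auto simp: F_def)
      have "q permutes S" unfolding q by (rule permutes_compose[OF p(1) s(1)])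
      moreover have "q ` A = C2" unfolding q image_comp[symmetric] p(2) s(2) ..
      ultimately show "q \<in> F C2" by (simp add: F_def)
    qed
    ultimately show ?thesis using card_inj_on_le finF by blast
  qed
  define Q where "Q = {B. B \<subseteq> S \<and> card B = card A}"
  have finQ: "finite Q" using assms(1) by (simp add: Q_def)
  have eq: "{p. p permutes S} = (\<Union>B\<in>Q. F B)"
  proof (intro equalityI subsetI)
    fix p assume "p \<in> {p. p permutes S}"
    then have p: "p permutes S" by simp
    have "p ` A \<subseteq> S" using permutes_image[OF p] assms(2) by blast
    moreover have "card (p ` A) = card A"
      using permutes_inj[OF p] by (simp add: card_image inj_on_subset)
    ultimately show "p \<in> (\<Union>B\<in>Q. F B)" using p by (auto simp: Q_def F_def)
  qed (auto simp: F_def)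
  have "fact (card S) = card (\<Union>B\<in>Q. F B)"
    using eq card_permutations[OF refl assms(1)] by simp
  also have "\<dots> = (\<Sum>B\<in>Q. card (F B))"
    by (rule card_UN_disjoint[OF finQ]) (simp add: finF, auto simp: F_def)
  also have "\<dots> = (\<Sum>B\<in>Q. card (F C))"
  proof (rule sum.cong[OF refl])
    fix B assume "B \<in> Q"
    then have B: "B \<subseteq> S" "card B = card A" by (auto simp: Q_def)
    show "card (F B) = card (F C)"
      using le[OF B(1) assms(3) B(2) assms(4)] le[OF assms(3) B(1) assms(4) B(2)] by simp
  qed
  also have "\<dots> = card (F C) * (card S choose card A)"
    using n_subsets[OF assms(1)] by (simp add: Q_def)
  finally show ?thesis by (simp add: F_def)
qed


lemma card_Xpairs:
  assumes "finite X1"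
  shows "card (Xpairs X1 X2 p) = card {i\<in>X1. p i \<in> X2}"
proof -
  have "Xpairs X1 X2 p = (\<lambda>i. (i, p i)) ` {i\<in>X1. p i \<in> X2}" by (auto simp: Xpairs_def)
  then show ?thesis by (simp add: card_image inj_on_def)
qed

lemma choose_Xpairs:
  assumes "finite X1"
  shows "card (Xpairs X1 X2 p) choose k = card {A. A \<subseteq> X1 \<and> card A = k \<and> p ` A \<subseteq> X2}"
proof -
  have "{A. A \<subseteq> X1 \<and> card A = k \<and> p ` A \<subseteq> X2} = {A. A \<subseteq> {i\<in>X1. p i \<in> X2} \<and> card A = k}"
    by auto
  then show ?thesis using n_subsets[of "{i\<in>X1. p i \<in> X2}" k] assms by (simp add: card_Xpairs)
qed

lemma card_swap:
  assumes "finite P" "finite Q"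
  shows "(\<Sum>p\<in>P. card {a\<in>Q. R p a}) = (\<Sum>a\<in>Q. card {p\<in>P. R p a})"
proof -
  have c: "card {x\<in>A. T x} = (\<Sum>x\<in>A. if T x then 1 else (0::nat))" if "finite A" for A :: "'c set" and T
    using that by (simp add: sum.If_cases Int_def)
  have "(\<Sum>p\<in>P. card {a\<in>Q. R p a}) = (\<Sum>p\<in>P. \<Sum>a\<in>Q. if R p a then 1 else 0)"
    using assms by (simp add: c)
  also have "\<dots> = (\<Sum>a\<in>Q. \<Sum>p\<in>P. if R p a then 1 else 0)" by (rule sum.swap)
  also have "\<dots> = (\<Sum>a\<in>Q. card {p\<in>P. R p a})" using assms by (simp add: c)
  finally show ?thesis .
qed

lemma sum_choose_count:
  assumes "finite S" "X1 \<subseteq> S" "X2 \<subseteq> S"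
  shows "(\<Sum>p\<in>{p. p permutes S}. card (Xpairs X1 X2 p) choose k) * (card S choose k)
       = (card X1 choose k) * (card X2 choose k) * fact (card S)"
proof -
  define P where "P = {p. p permutes S}"
  define Q1 where "Q1 = {A. A \<subseteq> X1 \<and> card A = k}"
  define Q2 where "Q2 = {C. C \<subseteq> X2 \<and> card C = k}"
  have fin0: "finite X1" "finite X2" using assms finite_subset by auto
  have "finite Q1" by (rule finite_subset[of _ "Pow X1"]) (use fin0 in \<open>auto simp: Q1_def\<close>)
  moreover have "finite Q2" by (rule finite_subset[of _ "Pow X2"]) (use fin0 in \<open>auto simp: Q2_def\<close>)
  ultimately have fin: "finite P" "finite Q1" "finite Q2" "finite X1" "finite X2"
    using fin0 assms by (auto simp: P_def finite_permutations)
  have e1: "(\<Sum>p\<in>P. card (Xpairs X1 X2 p) choose k) = (\<Sum>p\<in>P. card {A\<in>Q1. p ` A \<subseteq> X2})"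
    using fin by (intro sum.cong refl) (simp add: choose_Xpairs Q1_def conj_assoc)
  also have "\<dots> = (\<Sum>A\<in>Q1. card {p\<in>P. p ` A \<subseteq> X2})" by (rule card_swap[OF fin(1,2)])
  finally have e2: "(\<Sum>p\<in>P. card (Xpairs X1 X2 p) choose k) = (\<Sum>A\<in>Q1. card {p\<in>P. p ` A \<subseteq> X2})" .
  have "(\<Sum>A\<in>Q1. card {p\<in>P. p ` A \<subseteq> X2}) * (card S choose k)
      = (\<Sum>A\<in>Q1. card {p\<in>P. p ` A \<subseteq> X2} * (card S choose k))"
    by (rule sum_distrib_right)
  also have "\<dots> = (\<Sum>A\<in>Q1. (card X2 choose k) * fact (card S))"
  proof (rule sum.cong[OF refl])
    fix A assume "A \<in> Q1"
    then have A: "A \<subseteq> S" "card A = k" using assms by (auto simp: Q1_def)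
    define F where "F C = {p. p permutes S \<and> p ` A = C}" for C
    have finF: "finite (F C)" for C
      using finite_permutations[OF assms(1)] by (rule finite_subset[rotated]) (auto simp: F_def)
    have "{p\<in>P. p ` A \<subseteq> X2} = (\<Union>C\<in>Q2. F C)"
    proof (intro equalityI subsetI)
      fix p assume "p \<in> {p\<in>P. p ` A \<subseteq> X2}"
      then have p: "p permutes S" "p ` A \<subseteq> X2" by (auto simp: P_def)
      have "card (p ` A) = k" using permutes_inj[OF p(1)] A by (simp add: card_image inj_on_subset)
      then show "p \<in> (\<Union>C\<in>Q2. F C)" using p by (auto simp: Q2_def F_def)
    qed (auto simp: P_def Q2_def F_def)
    moreover have "card (\<Union>C\<in>Q2. F C) = (\<Sum>C\<in>Q2. card (F C))"
      by (rule card_UN_disjoint[OF fin(3)]) (simp add: finF, auto simp: F_def)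
    ultimately have "card {p\<in>P. p ` A \<subseteq> X2} * (card S choose k) = (\<Sum>C\<in>Q2. card (F C) * (card S choose k))"
      by (simp add: sum_distrib_right)
    also have "\<dots> = (\<Sum>C\<in>Q2. fact (card S))"
    proof (rule sum.cong[OF refl])
      fix C assume "C \<in> Q2"
      then have "C \<subseteq> S" "card C = card A" using assms A by (auto simp: Q2_def)
      then show "card (F C) * (card S choose k) = fact (card S)"
        using fiber_card[OF assms(1) A(1)] A(2) by (simp add: F_def)
    qed
    also have "\<dots> = (card X2 choose k) * fact (card S)"
      using n_subsets[OF fin(5)] by (simp add: Q2_def)
    finally show "card {p\<in>P. p ` A \<subseteq> X2} * (card S choose k) = (card X2 choose k) * fact (card S)" .
  qed
  also have "\<dots> = (card X1 choose k) * (card X2 choose k) * fact (card S)"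
    using n_subsets[OF fin(4)] by (simp add: Q1_def)
  finally show ?thesis using e2 by (simp add: P_def)
qed

lemma choose_prod_le:
  fixes a b s :: nat
  shows "(a choose s) * (b choose s) * fact s \<le> (a * b choose s)"
proof (induction s)
  case 0 then show ?case by simp
next
  case (Suc s)
  have r: "Suc s * (n choose Suc s) = (n - s) * (n choose s)" for n
    using binomial_absorption[of s n] binomial_absorb_comp[of n s] by simp
  have key: "(a - s) * (b - s) \<le> a * b - s"
  proof -
    have "(a - s) * (b - s) \<le> (a - s) * b" by (rule mult_le_mono2) simp
    also have "\<dots> = a * b - s * b" by (simp add: diff_mult_distrib)
    also have "\<dots> \<le> a * b - s"
    proof (cases "b = 0")
      case False then show ?thesis by (intro diff_le_mono2) simp
    qed simp
    finally show ?thesis .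
  qed
  have "Suc s * ((a choose Suc s) * (b choose Suc s) * fact (Suc s))
     = (Suc s * (a choose Suc s)) * (Suc s * (b choose Suc s)) * fact s"
    by (simp add: algebra_simps)
  also have "\<dots> = ((a - s) * (b - s)) * ((a choose s) * (b choose s) * fact s)"
    by (simp only: r) (simp add: algebra_simps)
  also have "\<dots> \<le> (a * b - s) * (a * b choose s)"
    by (rule mult_le_mono[OF key Suc.IH])
  also have "\<dots> = Suc s * (a * b choose Suc s)" by (simp only: r)
  finally show ?case by (rule Suc_mult_le_cancel1[THEN iffD1])
qed

lemma exp_fact_bound: "exp (4 * real (Suc m) / 9) \<le> 3 * fact m"
proof (induction m)
  case 0
  have "exp (4/9::real) \<le> exp 1" by simp
  with exp_le have "exp (4/9::real) \<le> 3" by linarith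
  then show ?case by simp
next
  case (Suc m)
  show ?case
  proof (cases "m = 0")
    case True
    have "exp (8/9::real) \<le> exp 1" by simp
    with exp_le have "exp (8/9::real) \<le> 3" by linarith
    then show ?thesis using True by simp
  next
    case False
    have "exp (4/9::real) \<le> exp (1/2)" by simp
    then have e: "exp (4/9::real) \<le> 2" using exp_half_le2 by linarith
    have "exp (4 * real (Suc (Suc m)) / 9) = exp (4 * real (Suc m) / 9) * exp (4/9)"
      by (simp add: exp_add[symmetric] field_simps)
    also have "\<dots> \<le> (3 * fact m) * real (Suc m)"
      by (rule mult_mono[OF Suc.IH]) (use e False in auto)
    also have "\<dots> = 3 * fact (Suc m)" by simp
    finally show ?thesis .
  qed
qed


lemma trm_lemma:
  fixes k s :: nat assumes "s \<noteq> 0" "k \<ge> s" shows "k \<le> s * (k choose s)"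
proof -
  have "s * (k choose s) = k * (k - 1 choose (s - 1))"
    using times_binomial_minus1_eq[of s "k"] \<open>s \<noteq> 0\<close> by simp
  moreover have "s - 1 \<le> k - 1" using assms by simp
  then have "0 < (k - 1 choose (s - 1))" by (rule zero_less_binomial)
  then have "(k - 1 choose (s - 1)) \<ge> 1" by linarith
  moreover have "k * 1 \<le> k * (k - 1 choose (s - 1))"
    using \<open>(k - 1 choose (s - 1)) \<ge> 1\<close> by (rule mult_le_mono2)
  ultimately show ?thesis by simp
qed

lemma fact_shift:
  fixes s X :: nat assumes "s \<noteq> 0" shows "s * X * fact (s - 1) = X * fact s"
proof -
  obtain m where m: "s = Suc m" using \<open>s \<noteq> 0\<close> by (cases s) auto
  show ?thesis unfolding m by (simp add: algebra_simps)
qed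

lemma tail_nat:
  fixes K :: "'a \<Rightarrow> nat"
  assumes "finite P" "s \<noteq> 0" "(\<Sum>p\<in>P. K p choose s) * fact s \<le> F"
  shows "(\<Sum>p\<in>{p\<in>P. s \<le> K p}. K p) * fact (s - 1) \<le> F"
proof -
  have "(\<Sum>p\<in>{p\<in>P. s \<le> K p}. K p) \<le> (\<Sum>p\<in>{p\<in>P. s \<le> K p}. s * (K p choose s))"
    by (rule sum_mono) (use trm_lemma[OF assms(2)] in auto)
  also have "\<dots> \<le> (\<Sum>p\<in>P. s * (K p choose s))"
    by (rule sum_mono2[OF assms(1)]) auto
  also have "\<dots> = s * (\<Sum>p\<in>P. K p choose s)" by (simp add: sum_distrib_left)
  finally have "(\<Sum>p\<in>{p\<in>P. s \<le> K p}. K p) * fact (s - 1) \<le> s * (\<Sum>p\<in>P. K p choose s) * fact (s - 1)"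
    by (rule mult_le_mono1)
  also have "\<dots> = (\<Sum>p\<in>P. K p choose s) * fact s" by (rule fact_shift[OF assms(2)])
  also have "\<dots> \<le> F" by (rule assms(3))
  finally show ?thesis .
qed

lemma final_real:
  fixes u :: real and n s N :: nat
  assumes nf: "real n * fact (s - 1) \<le> fact N" and eb: "exp (4 * u / 9) \<le> 3 * fact (s - 1)"
  shows "real n / fact N \<le> 3 * exp (- (4 * u / 9))"
proof -
  have fpos: "(0::real) < fact (s - 1)" "(0::real) < fact N" by (rule fact_gt_zero)+
  have epos: "0 < exp (4 * u / 9)" by (rule exp_gt_zero)
  have eq1: "1 / fact (s - 1) * fact N = (fact N / fact (s - 1) :: real)"
    by (simp only: times_divide_eq_left mult_1)
  have eq2: "1 / fact (s - 1) * exp (4 * u / 9) = (exp (4 * u / 9) / fact (s - 1) :: real)"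
    by (simp only: times_divide_eq_left mult_1)
  have "real n \<le> fact N / fact (s - 1)"
    unfolding pos_le_divide_eq[OF fpos(1)] by (rule nf)
  then have "real n \<le> 1 / fact (s - 1) * fact N" by (simp only: eq1)
  then have "real n / fact N \<le> 1 / fact (s - 1)"
    by (simp only: pos_divide_le_eq[OF fpos(2)])
  also have "\<dots> \<le> 3 / exp (4 * u / 9)"
  proof -
    have "exp (4 * u / 9) / fact (s - 1) \<le> 3"
      unfolding pos_divide_le_eq[OF fpos(1)] by (rule eb)
    then have "1 / fact (s - 1) * exp (4 * u / 9) \<le> 3" by (simp only: eq2)
    then show ?thesis unfolding pos_le_divide_eq[OF epos] .
  qed
  also have "\<dots> = 3 * exp (- (4 * u / 9))" unfolding exp_minus by (rule divide_inverse)
  finally show ?thesis .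
qed

theorem theorem3:
  fixes N :: nat and X1 X2 :: "nat set" and u :: real
  assumes "X1 \<subseteq> {1..N}" and "X2 \<subseteq> {1..N}"
    and "card X1 * card X2 = N"
    and "u \<ge> 6 * DX_expect N X1 X2 (\<lambda>\<sigma>. real (card (Xpairs X1 X2 \<sigma>)))"
  shows "DX_prob N X1 X2 (\<lambda>\<pi>. real (card (Xpairs X1 X2 \<pi>)) \<ge>
            DX_expect N X1 X2 (\<lambda>\<sigma>. real (card (Xpairs X1 X2 \<sigma>))) + u)
         \<le> 3 * exp (- (4 * u / 9))"
proof -
  define S where "S = {1..N}"
  define P where "P = SN N"
  define K where "K p = card (Xpairs X1 X2 p)" for p
  define D where "D = (\<Sum>\<sigma>\<in>P. real (K \<sigma>))"
  define \<mu> where "\<mu> = DX_expect N X1 X2 (\<lambda>\<sigma>. real (card (Xpairs X1 X2 \<sigma>)))"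
  have PS: "P = {p. p permutes S}" by (simp add: P_def SN_def S_def)
  have finS: "finite S" by (simp add: S_def)
  have finP: "finite P" by (simp add: PS finS finite_permutations)
  have fin1: "finite X1" "finite X2" using assms(1,2) finite_subset by auto
  have DX_eq: "DX N X1 X2 p = real (K p) / D" for p by (simp add: DX_def K_def D_def P_def)
  have D0: "D \<ge> 0" by (simp add: D_def sum_nonneg)
  have mu0: "\<mu> \<ge> 0" unfolding \<mu>_def DX_expect_def by (intro sum_nonneg) (simp add: DX_eq D0)
  have u0: "u \<ge> 0" using assms(4) mu0 \<mu>_def by linarith
  define numN where "numN = (\<Sum>p\<in>{p\<in>P. real (K p) \<ge> \<mu> + u}. K p)"
  have prob: "DX_prob N X1 X2 (\<lambda>\<pi>. real (card (Xpairs X1 X2 \<pi>)) \<ge> \<mu> + u) = real numN / D"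
    by (simp add: DX_prob_def DX_eq sum_divide_distrib P_def K_def numN_def)
  have Kle: "K p \<le> card X1" for p
    unfolding K_def card_Xpairs[OF fin1(1)] by (rule card_mono[OF fin1(1)]) auto
  show ?thesis
    unfolding \<mu>_def[symmetric] prob
  proof (cases "N = 0")
    case True
    then have "X1 = {}" using assms(1) by auto
    then have "K p = 0" for p using Kle[of p] by simp
    then have "numN = 0" by (simp add: numN_def)
    then show "real numN / D \<le> 3 * exp (- (4 * u / 9))" by simp
  next
    case False
    have cardS: "card S = N" by (simp add: S_def)
    have b1: "card X2 \<ge> 1" using False assms(3) by (cases "card X2") auto
    have "(\<Sum>p\<in>P. K p choose 1) * (N choose 1) = (card X1 choose 1) * (card X2 choose 1) * fact N"
      using sum_choose_count[OF finS assms(1,2)[folded S_def], of 1] by (simp add: PS K_def cardS)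
    then have "(\<Sum>p\<in>P. K p) * N = N * fact N" using assms(3) by simp
    then have Ksum: "(\<Sum>p\<in>P. K p) = fact N" using False by simp
    then have Dfact: "D = fact N" unfolding D_def of_nat_sum[symmetric] by simp
    define s where "s = nat \<lceil>\<mu> + u\<rceil>"
    have set_eq: "{p\<in>P. real (K p) \<ge> \<mu> + u} = {p\<in>P. K p \<ge> s}"
      by (simp add: s_def)
    have num_le: "numN \<le> (\<Sum>p\<in>P. K p)"
      unfolding numN_def by (rule sum_mono2[OF finP]) auto
    show "real numN / D \<le> 3 * exp (- (4 * u / 9))"
    proof (cases "s = 0")
      case True
      then have "u = 0" using u0 mu0 by (simp add: s_def)
      have "numN \<le> fact N" using num_le Ksum by simp
      then have "real numN \<le> real (fact N)" by (simp only: of_nat_le_iff)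
      then have "real numN \<le> fact N" by simp
      then have "real numN / D \<le> 1"
        using Dfact by (simp add: divide_le_eq_1)
      then show ?thesis using \<open>u = 0\<close> by simp
    next
      case False
      have sumC: "(\<Sum>p\<in>P. K p choose s) * fact s \<le> fact N"
      proof (cases "s \<le> N")
        case True
        have cnt: "(\<Sum>p\<in>P. K p choose s) * (N choose s) = (card X1 choose s) * (card X2 choose s) * fact N"
          using sum_choose_count[OF finS assms(1,2)[folded S_def], of s] by (simp add: PS K_def cardS)
        have cp: "(card X1 choose s) * (card X2 choose s) * fact s \<le> N choose s"
          using choose_prod_le[where a="card X1" and b="card X2" and s=s] unfolding assms(3) .
        have "(\<Sum>p\<in>P. K p choose s) * fact s * (N choose s)
            = ((\<Sum>p\<in>P. K p choose s) * (N choose s)) * fact s"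
          by (simp only: mult_ac)
        also have "\<dots> = ((card X1 choose s) * (card X2 choose s) * fact N) * fact s"
          by (simp only: cnt)
        also have "\<dots> = (card X1 choose s) * (card X2 choose s) * fact s * fact N"
          by (simp only: mult_ac)
        also have "\<dots> \<le> (N choose s) * fact N"
          by (rule mult_le_mono1[OF cp])
        finally have "(\<Sum>p\<in>P. K p choose s) * fact s * (N choose s) \<le> fact N * (N choose s)"
          by (simp add: mult.commute)
        moreover have "N choose s > 0" using True by simp
        ultimately show ?thesis by simp
      next
        case False
        have "card X1 * 1 \<le> card X1 * card X2" using b1 by (rule mult_le_mono2)
        then have "card X1 \<le> N" using assms(3) by simp
        then have "K p choose s = 0" for p using Kle[of p] False by simp
        then have "(\<Sum>p\<in>P. K p choose s) = 0" by (intro sum.neutral) blast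
        then show ?thesis by simp
      qed
      have "numN * fact (s - 1) \<le> fact N"
        unfolding numN_def set_eq by (rule tail_nat[OF finP \<open>s \<noteq> 0\<close> sumC])
      then have "real (numN * fact (s - 1)) \<le> real (fact N)"
        by (simp only: of_nat_le_iff)
      then have nf: "real numN * fact (s - 1) \<le> fact N" by simp
      have "\<mu> + u \<le> real s" unfolding s_def by (rule nat_ceiling_le_eq[THEN iffD1]) simp
      then have us: "u \<le> real s" using mu0 by linarith
      have "exp (4 * u / 9) \<le> exp (4 * real (Suc (s - 1)) / 9)"
        using us \<open>s \<noteq> 0\<close> by simp
      also have "\<dots> \<le> 3 * fact (s - 1)" by (rule exp_fact_bound)
      finally have eb: "exp (4 * u / 9) \<le> 3 * fact (s - 1)" .
      have "real numN / fact N \<le> 3 * exp (- (4 * u / 9))" by (rule final_real[OF nf eb])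
      then show ?thesis unfolding Dfact .
    qed
  qed
qed

end
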